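(* Let $\psi$ be an $n$-dimensional unique sink orientation, and let $v^0, v^1, \dots, v^\rho$ be the sequence of vertices produced by Algorithm 1 started at $v^0$, where $\rho$ is the iteration in which the algorithm terminates. Then $r_\psi(v^0) \supseteq r_\psi(v^1) \supseteq \dots \supseteq r_\psi(v^\rho)$.
   Context: Let $Q^n = 2^{[n]}$ be the vertex set of the $n$-cube, with $u,v$ adjacent iff $|u\oplus v|=1$; faces are $F_{J,v}=\{u : v\oplus u\subseteq J\}$ for $J\subseteq[n]$. A unique sink orientation (USO) is an orientation of the cube's edges such that every nonempty face has a unique sink (vertex with no outgoing edges within the face). The outmap $s_\psi(v)$ is the set of coordinates $j$ such that the edge $\{v,v\oplus\{j\}\}$ is directed away from $v$. The reachmap is $r_\psi(v)=s_\psi(v)\cup\{j : \exists u \text{ reachable from } v \text{ by a directed path with } j\in s_\psi(u)\}$. Algorithm 1: given a starting vertex $v^0$, set $E^0=\emptyset$ and $j=0$; while $s_\psi(v^j)\neq\emptyset$: pick any $b\in s_\psi(v^j)$, let $v^{j+1}$ be the sink of the face $F_{E^j, v^j\oplus\{b\}}$ (computed by the Fibonacci Seesaw algorithm of Szabó and Welzl), set $E^{j+1}=E^j\cup\{b\}$ and $j\leftarrow j+1$. The algorithm terminates at iteration $\rho$ when $s_\psi(v^\rho)=\emptyset$. *)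

theory Defs
  imports Main
begin

text \<open>Vertices of the n-cube are subsets of {1..n}; orientations are given by a
  relation d, where d u v means the edge {u,v} is directed from u to v.\<close>

definition sdiff :: "nat set \<Rightarrow> nat set \<Rightarrow> nat set" where
  "sdiff u v = (u - v) \<union> (v - u)"

definition cube :: "nat \<Rightarrow> nat set set" where
  "cube n = Pow {1..n}"

definition adjacent :: "nat set \<Rightarrow> nat set \<Rightarrow> bool" where
  "adjacent u v \<longleftrightarrow> card (sdiff u v) = 1"

definition orientation :: "nat \<Rightarrow> (nat set \<Rightarrow> nat set \<Rightarrow> bool) \<Rightarrow> bool" where
  "orientation n d \<longleftrightarrow>
     (\<forall>u v. d u v \<longrightarrow> u \<in> cube n \<and> v \<in> cube n \<and> adjacent u v) \<and>
     (\<forall>u\<in>cube n. \<forall>v\<in>cube n. adjacent u v \<longrightarrow> (d u v \<longleftrightarrow> \<not> d v u))"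

definition face :: "nat \<Rightarrow> nat set \<Rightarrow> nat set \<Rightarrow> nat set set" where
  "face n J v = {u \<in> cube n. sdiff v u \<subseteq> J}"

definition is_sink :: "(nat set \<Rightarrow> nat set \<Rightarrow> bool) \<Rightarrow> nat set set \<Rightarrow> nat set \<Rightarrow> bool" where
  "is_sink d F x \<longleftrightarrow> x \<in> F \<and> (\<forall>y\<in>F. \<not> d x y)"

definition USO :: "nat \<Rightarrow> (nat set \<Rightarrow> nat set \<Rightarrow> bool) \<Rightarrow> bool" where
  "USO n d \<longleftrightarrow> orientation n d \<and>
     (\<forall>J. J \<subseteq> {1..n} \<longrightarrow> (\<forall>v\<in>cube n. \<exists>!x. is_sink d (face n J v) x))"

definition face_sink :: "nat \<Rightarrow> (nat set \<Rightarrow> nat set \<Rightarrow> bool) \<Rightarrow> nat set \<Rightarrow> nat set \<Rightarrow> nat set" where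
  "face_sink n d J v = (THE x. is_sink d (face n J v) x)"

definition outmap :: "nat \<Rightarrow> (nat set \<Rightarrow> nat set \<Rightarrow> bool) \<Rightarrow> nat set \<Rightarrow> nat set" where
  "outmap n d v = {j \<in> {1..n}. d v (sdiff v {j})}"

definition reachable :: "(nat set \<Rightarrow> nat set \<Rightarrow> bool) \<Rightarrow> nat set \<Rightarrow> nat set \<Rightarrow> bool" where
  "reachable d v u \<longleftrightarrow> (v, u) \<in> {(x, y). d x y}\<^sup>*"

definition reachmap :: "nat \<Rightarrow> (nat set \<Rightarrow> nat set \<Rightarrow> bool) \<Rightarrow> nat set \<Rightarrow> nat set" where
  "reachmap n d v = outmap n d v \<union> {j. \<exists>u. reachable d v u \<and> j \<in> outmap n d u}"

text \<open>A run of Algorithm 1: vertex sequence v, sets E, chosen coordinates b,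
  terminating at iteration rho. The face sink is unique, so the way it is computed
  (Fibonacci Seesaw) is irrelevant.\<close>
definition alg1_run :: "nat \<Rightarrow> (nat set \<Rightarrow> nat set \<Rightarrow> bool) \<Rightarrow> (nat \<Rightarrow> nat set) \<Rightarrow>
    (nat \<Rightarrow> nat set) \<Rightarrow> (nat \<Rightarrow> nat) \<Rightarrow> nat \<Rightarrow> bool" where
  "alg1_run n d v E b rho \<longleftrightarrow>
     v 0 \<in> cube n \<and> E 0 = {} \<and>
     (\<forall>j<rho. outmap n d (v j) \<noteq> {} \<and> b j \<in> outmap n d (v j) \<and>
        v (Suc j) = face_sink n d (E j) (sdiff (v j) {b j}) \<and>
        E (Suc j) = insert (b j) (E j)) \<and>
     outmap n d (v rho) = {}"

end

theory Submission
  imports Defs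
begin

lemma reach_refl: "reachable d u u" by (simp add: reachable_def)
lemma reach_trans: "reachable d u x \<Longrightarrow> reachable d x y \<Longrightarrow> reachable d u y"
  unfolding reachable_def by (meson rtrancl_trans)
lemma reach_step: "d u x \<Longrightarrow> reachable d x y \<Longrightarrow> reachable d u y"
  unfolding reachable_def by (simp add: converse_rtrancl_into_rtrancl)

lemma sdiff_tri: "sdiff w x \<subseteq> sdiff w u \<union> sdiff u x"
  by (auto simp: sdiff_def)

lemma face_sub: "u \<in> face n K w \<Longrightarrow> J \<subseteq> K \<Longrightarrow> face n J u \<subseteq> face n K w"
  unfolding face_def using sdiff_tri by blast

lemma sink_reach_aux:
  assumes uso: "USO n d" and fin: "finite J"
  shows "\<forall>w u s. J \<subseteq> {1..n} \<longrightarrow> w \<in> cube n \<longrightarrow> u \<in> face n J w \<longrightarrow>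
           is_sink d (face n J w) s \<longrightarrow> reachable d u s"
  using fin
proof (induction J rule: finite_induct)
  case empty
  show ?case
  proof (intro allI impI)
    fix w u s assume "w \<in> cube n" "u \<in> face n {} w" "is_sink d (face n {} w) s"
    hence "u = w" "s = w" unfolding face_def is_sink_def sdiff_def by auto
    thus "reachable d u s" by (simp add: reach_refl)
  qed
next
  case (insert j J)
  show ?case
  proof (intro allI impI)
    fix w u s assume J: "insert j J \<subseteq> {1..n}" and w: "w \<in> cube n"
      and u: "u \<in> face n (insert j J) w" and s: "is_sink d (face n (insert j J) w) s"
    let ?F = "face n (insert j J) w"
    have ucube: "u \<in> cube n" using u by (simp add: face_def)
    have JJ: "J \<subseteq> {1..n}" using J by auto
    have Fs: "face n J u \<subseteq> ?F" using face_sub[OF u] by blast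
    obtain s' where s': "is_sink d (face n J u) s'"
      using uso JJ ucube unfolding USO_def by blast
    have IH1: "reachable d u s'"
      using insert.IH JJ ucube s' by (auto simp: face_def sdiff_def)
    show "reachable d u s"
    proof (cases "s \<in> face n J u")
      case True
      hence "is_sink d (face n J u) s" using s Fs unfolding is_sink_def by blast
      thus ?thesis using insert.IH JJ ucube by (auto simp: face_def sdiff_def)
    next
      case False
      have uniq: "\<exists>!x. is_sink d ?F x" using uso J w unfolding USO_def by blast
      have s'F: "s' \<in> ?F" using s' Fs unfolding is_sink_def by blast
      have "s' \<noteq> s" using False s' unfolding is_sink_def by blast
      hence "\<not> is_sink d ?F s'" using uniq s by blast
      then obtain y where yF: "y \<in> ?F" and dy: "d s' y" using s'F unfolding is_sink_def by blast
      have yF': "y \<notin> face n J u" using s' dy unfolding is_sink_def by blast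
      have ycube: "y \<in> cube n" using yF by (simp add: face_def)
      have sF: "s \<in> ?F" using s unfolding is_sink_def by blast
      have "sdiff u y \<subseteq> insert j J" using u yF sdiff_tri[of u y w] unfolding face_def
        by (auto simp: sdiff_def)
      hence jy: "j \<in> sdiff u y" using yF' ycube unfolding face_def by blast
      have "sdiff u s \<subseteq> insert j J" using u sF sdiff_tri[of u s w] unfolding face_def
        by (auto simp: sdiff_def)
      hence js: "j \<in> sdiff u s" using False sF unfolding face_def by blast
      have "sdiff y s \<subseteq> insert j J" using yF sF sdiff_tri[of y s w] unfolding face_def
        by (auto simp: sdiff_def)
      moreover have "j \<notin> sdiff y s" using jy js by (auto simp: sdiff_def)
      ultimately have "sdiff y s \<subseteq> J" by blast
      hence sF'': "s \<in> face n J y" using sF unfolding face_def by blast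
      have yy: "y \<in> face n J y" using ycube by (simp add: face_def sdiff_def)
      have "face n J y \<subseteq> ?F" using face_sub[OF yF] by blast
      hence "is_sink d (face n J y) s" using s sF'' unfolding is_sink_def by blast
      hence "reachable d y s" using insert.IH JJ ycube yy by blast
      thus ?thesis using IH1 dy reach_trans reach_step by metis
    qed
  qed
qed

lemma reachmap_mono:
  assumes "reachable d v w" shows "reachmap n d w \<subseteq> reachmap n d v"
  using assms unfolding reachmap_def by (auto intro: reach_trans reach_refl)

lemma E_sub:
  assumes run: "alg1_run n d v E b rho"
  shows "j \<le> rho \<Longrightarrow> E j \<subseteq> {1..n}"
proof (induction j)
  case 0 thus ?case using run by (simp add: alg1_run_def)
next
  case (Suc j)
  hence "j < rho" by simp
  hence "b j \<in> outmap n d (v j)" "E (Suc j) = insert (b j) (E j)"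
    using run unfolding alg1_run_def by blast+
  thus ?case using Suc by (auto simp: outmap_def)
qed

lemma step_reach:
  assumes uso: "USO n d" and run: "alg1_run n d v E b rho" and j: "j < rho"
  shows "reachable d (v j) (v (Suc j))"
proof -
  have bj: "b j \<in> outmap n d (v j)" and vs: "v (Suc j) = face_sink n d (E j) (sdiff (v j) {b j})"
    using run j unfolding alg1_run_def by blast+
  let ?w = "sdiff (v j) {b j}"
  have dw: "d (v j) ?w" using bj by (simp add: outmap_def)
  have wc: "?w \<in> cube n" using uso dw unfolding USO_def orientation_def by blast
  have Ej: "E j \<subseteq> {1..n}" using E_sub[OF run] j by simp
  have fin: "finite (E j)" using Ej finite_subset by blast
  have "\<exists>!x. is_sink d (face n (E j) ?w) x" using uso Ej wc unfolding USO_def by blast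
  hence sk: "is_sink d (face n (E j) ?w) (v (Suc j))" unfolding vs face_sink_def by (rule theI')
  have ww: "?w \<in> face n (E j) ?w" using wc by (simp add: face_def sdiff_def)
  have "reachable d ?w (v (Suc j))"
    using sink_reach_aux[OF uso fin] Ej wc ww sk by blast
  thus ?thesis using dw reach_step by metis
qed

theorem lemma17:
  fixes n :: nat and d :: "nat set \<Rightarrow> nat set \<Rightarrow> bool"
    and v E :: "nat \<Rightarrow> nat set" and b :: "nat \<Rightarrow> nat" and rho :: nat
  assumes "USO n d"
    and "alg1_run n d v E b rho"
  shows "\<forall>i j. i \<le> j \<and> j \<le> rho \<longrightarrow> reachmap n d (v j) \<subseteq> reachmap n d (v i)"
proof (intro allI impI)
  fix i j assume h: "i \<le> j \<and> j \<le> rho"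
  have "j \<le> rho \<Longrightarrow> reachable d (v i) (v (i + k))" if "j = i + k" for k
    using that
  proof (induction k arbitrary: j)
    case 0 thus ?case by (simp add: reach_refl)
  next
    case (Suc k)
    have "reachable d (v i) (v (i + k))" using Suc.IH[of "i+k"] Suc.prems by simp
    moreover have "reachable d (v (i+k)) (v (Suc (i + k)))"
      using step_reach[OF assms] Suc.prems by simp
    ultimately show ?case by (simp add: reach_trans[of d])
  qed
  hence "reachable d (v i) (v j)" using h by (metis le_add_diff_inverse)
  thus "reachmap n d (v j) \<subseteq> reachmap n d (v i)" by (rule reachmap_mono)
qed

end
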